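(* Let $N$ be a phylogenetic network in tier $k>0$, and let $x$ be a split node with children $a_L$ and $a_R$. Let $(u,v)$ be an edge with $u$ a split node lying on the path from $x$ to $a_L$ (i.e. $u$ subdivides the edge $(x,a_L)$), and suppose the tail move of $(u,v)$ from $(x,a_L)$ to $(x,a_R)$ is valid, resulting in $N'$. Then there is a sequence of at most $6$ valid head moves transforming $N$ into $N'$.
   Context: A (binary) phylogenetic network on a finite label set $X$ ($|X|\ge 2$) is a directed acyclic graph without parallel edges having exactly one root (indegree 0, outdegree 1), exactly $|X|$ leaves (indegree 1, outdegree 0) bijectively labelled by $X$, and all other nodes are either split nodes (indegree 1, outdegree 2) or reticulations (indegree 2, outdegree 1). Tier $k$: exactly $k$ reticulations. Subdividing an edge $(a,b)$ means replacing it by a new node $x$ and edges $(a,x),(x,b)$; suppressing an indegree-1 outdegree-1 node $x$ with parent $a$ and child $b$ means deleting $x$ and its edges and adding $(a,b)$. Tail move of $(u,v)$ ($u$ a split node) to edge $f$: delete $(u,v)$, subdivide $f$ with new node $u'$, suppress $u$, add $(u',v)$; "from $(p,q)$ to $f$" means $p$ is the parent and $q$ the other child of $u$ (so $(p,q)$ is the edge created by suppressing $u$). Head move of $(u,v)$ ($v$ a reticulation) to $f$: delete $(u,v)$, subdivide $f$ with new node $v'$, suppress $v$, add $(u,v')$. A move is valid only if the result is a phylogenetic network. *)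

theory Defs
  imports Main
begin

text \<open>Phylogenetic networks: nodes are natural numbers (so fresh nodes always exist),
  edges are a set of pairs (no parallel edges), leaves are labelled by
  lab restricted to X (bijectively onto the leaves).\<close>

definition parents :: "(nat \<times> nat) set \<Rightarrow> nat \<Rightarrow> nat set" where
  "parents E w = {a. (a, w) \<in> E}"

definition children :: "(nat \<times> nat) set \<Rightarrow> nat \<Rightarrow> nat set" where
  "children E w = {b. (w, b) \<in> E}"

definition indeg :: "(nat \<times> nat) set \<Rightarrow> nat \<Rightarrow> nat" where
  "indeg E w = card (parents E w)"

definition outdeg :: "(nat \<times> nat) set \<Rightarrow> nat \<Rightarrow> nat" where
  "outdeg E w = card (children E w)"

definition split_node :: "(nat \<times> nat) set \<Rightarrow> nat \<Rightarrow> bool" where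
  "split_node E w \<longleftrightarrow> indeg E w = 1 \<and> outdeg E w = 2"

definition reticulation :: "(nat \<times> nat) set \<Rightarrow> nat \<Rightarrow> bool" where
  "reticulation E w \<longleftrightarrow> indeg E w = 2 \<and> outdeg E w = 1"

definition reticulations :: "nat set \<Rightarrow> (nat \<times> nat) set \<Rightarrow> nat set" where
  "reticulations V E = {w \<in> V. reticulation E w}"

definition is_network :: "'x set \<Rightarrow> ('x \<Rightarrow> nat) \<Rightarrow> nat set \<Rightarrow> (nat \<times> nat) set \<Rightarrow> bool" where
  "is_network X lab V E \<longleftrightarrow>
     finite X \<and> 2 \<le> card X \<and> finite V \<and> E \<subseteq> V \<times> V \<and> acyclic E \<and>
     card {w \<in> V. indeg E w = 0 \<and> outdeg E w = 1} = 1 \<and>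
     (\<forall>w \<in> V. (indeg E w = 0 \<and> outdeg E w = 1) \<or> (indeg E w = 1 \<and> outdeg E w = 0) \<or>
               split_node E w \<or> reticulation E w) \<and>
     bij_betw lab X {w \<in> V. indeg E w = 1 \<and> outdeg E w = 0}"

definition subdivide :: "nat set \<Rightarrow> (nat \<times> nat) set \<Rightarrow> nat \<times> nat \<Rightarrow> nat \<Rightarrow>
    nat set \<Rightarrow> (nat \<times> nat) set \<Rightarrow> bool" where
  "subdivide V E f w V' E' \<longleftrightarrow> f \<in> E \<and> w \<notin> V \<and> V' = insert w V \<and>
     E' = (E - {f}) \<union> {(fst f, w), (w, snd f)}"

text \<open>Suppressing an indegree-1 outdegree-1 node x (with parent a and child b).
  A resulting parallel edge (a,b) is excluded (never allowed in a network, and no later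
  step of a move deletes it).\<close>
definition suppress :: "nat set \<Rightarrow> (nat \<times> nat) set \<Rightarrow> nat \<Rightarrow>
    nat set \<Rightarrow> (nat \<times> nat) set \<Rightarrow> bool" where
  "suppress V E x V' E' \<longleftrightarrow> x \<in> V \<and> (\<exists>a b. parents E x = {a} \<and> children E x = {b} \<and>
     (a, b) \<notin> E \<and> V' = V - {x} \<and> E' = (E - {(a, x), (x, b)}) \<union> {(a, b)})"

definition tail_move :: "'x set \<Rightarrow> ('x \<Rightarrow> nat) \<Rightarrow> nat set \<Rightarrow> (nat \<times> nat) set \<Rightarrow>
    nat \<Rightarrow> nat \<Rightarrow> nat \<times> nat \<Rightarrow> nat set \<Rightarrow> (nat \<times> nat) set \<Rightarrow> bool" where
  "tail_move X lab V E u v f V' E' \<longleftrightarrow>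
     is_network X lab V E \<and> (u, v) \<in> E \<and> split_node E u \<and>
     (\<exists>u' V1 E1 V2 E2. subdivide V (E - {(u, v)}) f u' V1 E1 \<and> suppress V1 E1 u V2 E2 \<and>
        (u', v) \<notin> E2 \<and> V' = V2 \<and> E' = insert (u', v) E2) \<and>
     is_network X lab V' E'"

definition head_move :: "'x set \<Rightarrow> ('x \<Rightarrow> nat) \<Rightarrow> nat set \<Rightarrow> (nat \<times> nat) set \<Rightarrow>
    nat \<Rightarrow> nat \<Rightarrow> nat \<times> nat \<Rightarrow> nat set \<Rightarrow> (nat \<times> nat) set \<Rightarrow> bool" where
  "head_move X lab V E u v f V' E' \<longleftrightarrow>
     is_network X lab V E \<and> (u, v) \<in> E \<and> reticulation E v \<and>
     (\<exists>v' V1 E1 V2 E2. subdivide V (E - {(u, v)}) f v' V1 E1 \<and> suppress V1 E1 v V2 E2 \<and>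
        (u, v') \<notin> E2 \<and> V' = V2 \<and> E' = insert (u, v') E2) \<and>
     is_network X lab V' E'"

definition head_step :: "'x set \<Rightarrow> ('x \<Rightarrow> nat) \<Rightarrow>
    ((nat set \<times> (nat \<times> nat) set) \<times> (nat set \<times> (nat \<times> nat) set)) set" where
  "head_step X lab = {((V, E), (V', E')). \<exists>u v f. head_move X lab V E u v f V' E'}"

definition net_iso :: "'x set \<Rightarrow> ('x \<Rightarrow> nat) \<Rightarrow> nat set \<Rightarrow> (nat \<times> nat) set \<Rightarrow>
    nat set \<Rightarrow> (nat \<times> nat) set \<Rightarrow> bool" where
  "net_iso X lab V E V' E' \<longleftrightarrow> (\<exists>\<phi>. bij_betw \<phi> V V' \<and>
     (\<forall>a \<in> V. \<forall>b \<in> V. (a, b) \<in> E \<longleftrightarrow> (\<phi> a, \<phi> b) \<in> E') \<and>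
     (\<forall>y \<in> X. \<phi> (lab y) = lab y))"

end

theory Submission
  imports Defs
begin


definition hmE :: "(nat \<times> nat) set \<Rightarrow> nat \<Rightarrow> nat \<Rightarrow> nat \<Rightarrow> nat \<Rightarrow> nat \<Rightarrow> nat \<Rightarrow> nat \<Rightarrow> (nat \<times> nat) set" where
  "hmE E p r q c a b w = E - {(p,r),(q,r),(r,c),(a,b)} \<union> {(q,c),(a,w),(w,b),(p,w)}"

definition rank_ok :: "(nat \<times> nat) set \<Rightarrow> (nat \<Rightarrow> int) \<Rightarrow> bool" where
  "rank_ok G h \<longleftrightarrow> (\<forall>s t. (s,t) \<in> G \<longrightarrow> h s < h t)"

lemma rank_trancl: assumes "rank_ok G h" "(s,t) \<in> G\<^sup>+" shows "h s < h t"
  using assms(2)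
proof (induction rule: trancl_induct)
  case (base y) then show ?case using assms(1) by (simp add: rank_ok_def)
next
  case (step y z) then show ?case using assms(1) unfolding rank_ok_def by (meson order.strict_trans)
qed

lemma rank_acyclic: "rank_ok G h \<Longrightarrow> acyclic G"
  unfolding acyclic_def using rank_trancl by blast

lemma acyclic_rank:
  assumes "finite G" "acyclic G" shows "\<exists>h. rank_ok G h"
proof -
  define h where "h y = int (card {z. (z,y) \<in> G\<^sup>+})" for y
  have fin: "finite (G\<^sup>+)" using assms(1) by simp
  have "h s < h t" if st: "(s,t) \<in> G" for s t
  proof -
    have fs: "finite {z. (z,t) \<in> G\<^sup>+}"
    proof (rule finite_subset)
      show "{z. (z,t) \<in> G\<^sup>+} \<subseteq> Domain (G\<^sup>+)" by blast
      show "finite (Domain (G\<^sup>+))" using fin by (rule finite_Domain)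
    qed
    have sub: "{z. (z,s) \<in> G\<^sup>+} \<subset> {z. (z,t) \<in> G\<^sup>+}"
    proof
      show "{z. (z,s) \<in> G\<^sup>+} \<subseteq> {z. (z,t) \<in> G\<^sup>+}" using st by auto
      have "s \<in> {z. (z,t) \<in> G\<^sup>+}" using st by auto
      moreover have "s \<notin> {z. (z,s) \<in> G\<^sup>+}" using assms(2) by (auto simp: acyclic_def)
      ultimately show "{z. (z,s) \<in> G\<^sup>+} \<noteq> {z. (z,t) \<in> G\<^sup>+}" by blast
    qed
    show ?thesis unfolding h_def using psubset_card_mono[OF fs sub] by simp
  qed
  then show ?thesis unfolding rank_ok_def by blast
qed

lemma netD:
  assumes "is_network X lab V E"
  shows "finite V" "E \<subseteq> V \<times> V" "acyclic E" "finite X" "2 \<le> card X"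
    "card {w \<in> V. indeg E w = 0 \<and> outdeg E w = 1} = 1"
    "\<forall>w \<in> V. (indeg E w = 0 \<and> outdeg E w = 1) \<or> (indeg E w = 1 \<and> outdeg E w = 0) \<or>
               split_node E w \<or> reticulation E w"
    "bij_betw lab X {w \<in> V. indeg E w = 1 \<and> outdeg E w = 0}"
  using assms unfolding is_network_def by auto

lemma acyc_irr: "acyclic E \<Longrightarrow> (y,y) \<notin> E"
  unfolding acyclic_def by blast

lemma HM:
  fixes X :: "'x set"
  assumes net: "is_network X lab V E"
    and pr: "parents E r = {p,q}" and pq: "p \<noteq> q" and cr: "children E r = {c}"
    and ab: "(a,b) \<in> E" "(a,b) \<noteq> (p,r)" "(a,b) \<noteq> (q,r)" "(a,b) \<noteq> (r,c)"
    and qc: "(q,c) \<notin> E" and ap: "a \<noteq> p" and w: "w \<notin> V"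
    and rk: "rank_ok (hmE E p r q c a b w) h"
  shows "((V,E),(insert w (V-{r}), hmE E p r q c a b w)) \<in> head_step X lab"
    "is_network X lab (insert w (V-{r})) (hmE E p r q c a b w)"
    "parents (hmE E p r q c a b w) w = {a,p}" "children (hmE E p r q c a b w) w = {b}"
proof -
  define E' where "E' = hmE E p r q c a b w"
  define V' where "V' = insert w (V-{r})"
  note nd = netD[OF net]
  have EV: "E \<subseteq> V \<times> V" by (rule nd(2))
  have irr: "\<And>y. (y,y) \<notin> E" using acyc_irr[OF nd(3)] .
  have prE: "(p,r) \<in> E" "(q,r) \<in> E" using pr by (auto simp: parents_def)
  have rcE: "(r,c) \<in> E" using cr by (auto simp: children_def)
  have par_r: "\<And>s. (s,r) \<in> E \<Longrightarrow> s = p \<or> s = q" using pr by (auto simp: parents_def)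
  have ch_r: "\<And>t. (r,t) \<in> E \<Longrightarrow> t = c" using cr by (auto simp: children_def)
  have inV: "p \<in> V" "q \<in> V" "r \<in> V" "c \<in> V" "a \<in> V" "b \<in> V"
    using prE rcE ab(1) EV by auto
  have wE: "\<And>s. (s,w) \<notin> E" "\<And>t. (w,t) \<notin> E" using w EV by auto
  have ar: "a \<noteq> r" using ch_r ab by auto
  have br: "b \<noteq> r" using par_r ab by auto
  have nr: "p \<noteq> r" "q \<noteq> r" "c \<noteq> r" using irr prE rcE by auto
  have nw: "w \<noteq> p" "w \<noteq> q" "w \<noteq> r" "w \<noteq> c" "w \<noteq> a" "w \<noteq> b" using w inV by auto
  have parE': "parents E' y = (\<lambda>s. if y = c \<and> s = r then q else if y = b \<and> s = a then w else s) ` parents E y"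
    if "y \<in> V" "y \<noteq> r" for y
  proof (rule set_eqI)
    fix s
    show "s \<in> parents E' y \<longleftrightarrow> s \<in> (\<lambda>s. if y = c \<and> s = r then q else if y = b \<and> s = a then w else s) ` parents E y"
      using that nw rcE ab(1) wE qc ar br nr w
      unfolding parents_def E'_def hmE_def image_iff
      apply (cases "y = c \<and> s = q")
       apply (rule iffI)
        apply (rule bexI[of _ r], simp, simp)
       apply simp
      by auto
  qed
  have injp: "inj_on (\<lambda>s. if y = c \<and> s = r then q else if y = b \<and> s = a then w else s) (parents E y)"
    if "y \<in> V" "y \<noteq> r" for y
    using that nw wE qc ar br nr ab
    unfolding inj_on_def parents_def by auto
  have chE': "children E' y = (\<lambda>t. if y = q \<and> t = r then c else if y = p \<and> t = r then w else if y = a \<and> t = b then w else t) ` children E y"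
    if "y \<in> V" "y \<noteq> r" for y
  proof (rule set_eqI)
    fix t
    show "t \<in> children E' y \<longleftrightarrow> t \<in> (\<lambda>t. if y = q \<and> t = r then c else if y = p \<and> t = r then w else if y = a \<and> t = b then w else t) ` children E y"
      using that nw prE ab(1) wE qc ar br nr ap pq w
      unfolding children_def E'_def hmE_def image_iff
      apply (cases "y = q \<and> t = c")
       apply (rule iffI)
        apply (rule bexI[of _ r], simp, simp)
       apply simp
      by auto
  qed
  have injc: "inj_on (\<lambda>t. if y = q \<and> t = r then c else if y = p \<and> t = r then w else if y = a \<and> t = b then w else t) (children E y)"
    if "y \<in> V" "y \<noteq> r" for y
    using that nw wE qc ar br nr ab ap pq
    unfolding inj_on_def children_def by auto
  have indeg_eq: "indeg E' y = indeg E y" if "y \<in> V" "y \<noteq> r" for y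
    unfolding indeg_def parE'[OF that] using card_image[OF injp[OF that]] .
  have outdeg_eq: "outdeg E' y = outdeg E y" if "y \<in> V" "y \<noteq> r" for y
    unfolding outdeg_def chE'[OF that] using card_image[OF injc[OF that]] .
  have parw: "parents E' w = {a,p}"
    unfolding parents_def E'_def hmE_def using wE nw by auto
  have chw: "children E' w = {b}"
    unfolding children_def E'_def hmE_def using wE nw by auto
  have indw: "indeg E' w = 2" "outdeg E' w = 1"
    unfolding indeg_def outdeg_def parw chw using ap by auto
  have indr: "indeg E r = 2" "outdeg E r = 1"
    unfolding indeg_def outdeg_def pr cr using pq by auto
  have E'V: "E' \<subseteq> V' \<times> V'"
  proof
    fix e assume "e \<in> E'"
    then show "e \<in> V' \<times> V'"
      using EV inV ar br nr par_r ch_r unfolding E'_def hmE_def V'_def by auto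
  qed
  have roots: "{y \<in> V'. indeg E' y = 0 \<and> outdeg E' y = 1} = {y \<in> V. indeg E y = 0 \<and> outdeg E y = 1}"
  proof (rule set_eqI)
    fix y show "y \<in> {y \<in> V'. indeg E' y = 0 \<and> outdeg E' y = 1} \<longleftrightarrow> y \<in> {y \<in> V. indeg E y = 0 \<and> outdeg E y = 1}"
      using indeg_eq[of y] outdeg_eq[of y] indw indr w unfolding V'_def
      by (cases "y = r"; cases "y = w") auto
  qed
  have leaves: "{y \<in> V'. indeg E' y = 1 \<and> outdeg E' y = 0} = {y \<in> V. indeg E y = 1 \<and> outdeg E y = 0}"
  proof (rule set_eqI)
    fix y show "y \<in> {y \<in> V'. indeg E' y = 1 \<and> outdeg E' y = 0} \<longleftrightarrow> y \<in> {y \<in> V. indeg E y = 1 \<and> outdeg E y = 0}"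
      using indeg_eq[of y] outdeg_eq[of y] indw indr w unfolding V'_def
      by (cases "y = r"; cases "y = w") auto
  qed
  have types: "\<forall>y \<in> V'. (indeg E' y = 0 \<and> outdeg E' y = 1) \<or> (indeg E' y = 1 \<and> outdeg E' y = 0) \<or>
               split_node E' y \<or> reticulation E' y"
  proof
    fix y assume y: "y \<in> V'"
    show "(indeg E' y = 0 \<and> outdeg E' y = 1) \<or> (indeg E' y = 1 \<and> outdeg E' y = 0) \<or>
               split_node E' y \<or> reticulation E' y"
    proof (cases "y = w")
      case True then show ?thesis using indw by (simp add: reticulation_def)
    next
      case False
      then have "y \<in> V" "y \<noteq> r" using y unfolding V'_def by auto
      then show ?thesis using nd(7) indeg_eq[of y] outdeg_eq[of y]
        unfolding split_node_def reticulation_def by auto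
    qed
  qed
  have net': "is_network X lab V' E'"
    unfolding is_network_def using nd E'V rank_acyclic[OF rk[folded E'_def]] roots leaves types
    unfolding V'_def by auto
  define E1 where "E1 = (E - {(p,r)} - {(a,b)}) \<union> {(a,w),(w,b)}"
  define E2 where "E2 = (E1 - {(q,r),(r,c)}) \<union> {(q,c)}"
  have sd: "subdivide V (E - {(p,r)}) (a,b) w (insert w V) E1"
    unfolding subdivide_def E1_def using ab w by simp
  have p1: "parents E1 r = {q}"
  proof (rule set_eqI)
    fix s show "s \<in> parents E1 r \<longleftrightarrow> s \<in> {q}"
      using par_r[of s] prE ab nw pq br ar unfolding parents_def E1_def by auto
  qed
  have c1: "children E1 r = {c}"
  proof (rule set_eqI)
    fix t show "t \<in> children E1 r \<longleftrightarrow> t \<in> {c}"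
      using ch_r[of t] rcE ab nw br ar nr unfolding children_def E1_def by auto
  qed
  have qc1: "(q,c) \<notin> E1" unfolding E1_def using qc nw by simp
  have sp: "suppress (insert w V) E1 r (insert w V - {r}) E2"
    unfolding suppress_def E2_def using p1 c1 qc1 inV by blast
  have pw2: "(p,w) \<notin> E2" unfolding E2_def E1_def using wE ap nw by simp
  have VV: "V' = insert w V - {r}" unfolding V'_def using nw by auto
  have EE: "E' = insert (p,w) E2"
  proof (rule set_eqI)
    fix e :: "nat \<times> nat"
    obtain s t where e: "e = (s,t)" by (cases e)
    show "e \<in> E' \<longleftrightarrow> e \<in> insert (p,w) E2"
      unfolding e E'_def E2_def E1_def hmE_def using nw ab pq nr
      by auto
  qed
  have hm: "head_move X lab V E p r (a,b) V' E'"
    unfolding head_move_def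
    using net prE indr net' sd sp pw2 VV EE unfolding reticulation_def by blast
  show "((V,E),(insert w (V-{r}), hmE E p r q c a b w)) \<in> head_step X lab"
    using hm unfolding head_step_def V'_def E'_def by blast
  show "is_network X lab (insert w (V-{r})) (hmE E p r q c a b w)" using net' unfolding V'_def E'_def .
  show "parents (hmE E p r q c a b w) w = {a,p}" using parw unfolding E'_def .
  show "children (hmE E p r q c a b w) w = {b}" using chw unfolding E'_def .
qed



lemma rp2: "(A,B) \<in> R \<Longrightarrow> (B,C) \<in> R \<Longrightarrow> (A,C) \<in> R ^^ 2"
  by (simp add: numeral_2_eq_2 relcomp.relcompI)

lemma rp_add: "(A,B) \<in> R ^^ m \<Longrightarrow> (B,C) \<in> R ^^ n \<Longrightarrow> (A,C) \<in> R ^^ (m+n)"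
  by (simp add: relpow_add relcomp.relcompI)

lemma rp1: "(A,B) \<in> (R::('a\<times>'a) set) \<Longrightarrow> (A,B) \<in> R ^^ 1" by simp

lemma rank_mono: "rank_ok G h \<Longrightarrow> H \<subseteq> G \<Longrightarrow> rank_ok H h"
  unfolding rank_ok_def by blast

lemma rank_hmE:
  assumes "rank_ok G h" "E \<subseteq> G" "E \<subseteq> V \<times> V" "w \<notin> V"
    "q \<noteq> w" "c \<noteq> w" "a \<noteq> w" "b \<noteq> w" "p \<noteq> w"
    "h q < h c" "h a < h b" "h p < h b"
  shows "rank_ok (hmE E p r q c a b w) (\<lambda>y. if y = w then 2 * h b - 1 else 2 * h y)"
  unfolding rank_ok_def
proof (intro allI impI)
  fix s t assume st: "(s,t) \<in> hmE E p r q c a b w"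
  show "(if s = w then 2 * h b - 1 else 2 * h s) < (if t = w then 2 * h b - 1 else 2 * h t)"
  proof (cases "(s,t) \<in> E")
    case True
    then have "s \<noteq> w" "t \<noteq> w" "h s < h t" using assms(1-4) unfolding rank_ok_def by auto
    then show ?thesis by simp
  next
    case False
    then have "(s,t) \<in> {(q,c),(a,w),(w,b),(p,w)}" using st unfolding hmE_def by auto
    then show ?thesis using assms(5-12) by auto
  qed
qed

lemma ret_facts:
  assumes net: "is_network X lab V E" and pr: "parents E r = {p,q}" and cr: "children E r = {c}"
  shows "(p,r) \<in> E" "(q,r) \<in> E" "(r,c) \<in> E" "\<And>s. (s,r) \<in> E \<Longrightarrow> s = p \<or> s = q"
    "\<And>t. (r,t) \<in> E \<Longrightarrow> t = c" "p \<in> V" "q \<in> V" "r \<in> V" "c \<in> V" "p \<noteq> r" "q \<noteq> r" "c \<noteq> r"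
proof -
  note nd = netD[OF net]
  show pE: "(p,r) \<in> E" "(q,r) \<in> E" using pr by (auto simp: parents_def)
  show cE: "(r,c) \<in> E" using cr by (auto simp: children_def)
  show "\<And>s. (s,r) \<in> E \<Longrightarrow> s = p \<or> s = q" using pr by (auto simp: parents_def)
  show "\<And>t. (r,t) \<in> E \<Longrightarrow> t = c" using cr by (auto simp: children_def)
  show "p \<in> V" "q \<in> V" "r \<in> V" "c \<in> V" using pE cE nd(2) by auto
  show "p \<noteq> r" "q \<noteq> r" "c \<noteq> r" using pE cE acyc_irr[OF nd(3)] by auto
qed

lemma SW:
  fixes X :: "'x set"
  assumes net: "is_network X lab V E"
    and pr: "parents E Z = {P,s}" and Ps: "P \<noteq> s" and cr: "children E Z = {c}"
    and QY: "(Q,Y) \<in> E" "(Q,Y) \<noteq> (P,Z)" "(Q,Y) \<noteq> (s,Z)" "(Q,Y) \<noteq> (Z,c)"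
    and sc: "(s,c) \<notin> E" and QP: "Q \<noteq> P" and Qs: "Q \<noteq> s" and PY: "(P,Y) \<notin> E"
    and w: "w \<notin> V" and rk: "rank_ok (E \<union> {(P,Y),(Q,Z)}) h"
  shows "((V,E),(V, E - {(P,Z),(Q,Y)} \<union> {(P,Y),(Q,Z)})) \<in> head_step X lab ^^ 2"
    "is_network X lab V (E - {(P,Z),(Q,Y)} \<union> {(P,Y),(Q,Z)})"
proof -
  note rf = ret_facts[OF net pr cr]
  note nd = netD[OF net]
  have QYV: "Q \<in> V" "Y \<in> V" using QY(1) nd(2) by auto
  have nw: "P \<noteq> w" "s \<noteq> w" "Z \<noteq> w" "c \<noteq> w" "Q \<noteq> w" "Y \<noteq> w" using rf(6-9) QYV w by auto
  have YZ: "Y \<noteq> Z" using rf(4)[of Q] QY QP Qs by auto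
  define E1 where "E1 = hmE E P Z s c Q Y w"
  have hrk0: "h s < h Z" "h Z < h c" "h Q < h Y" "h P < h Y"
    using rk rf(2,3) QY(1) unfolding rank_ok_def by auto
  have hrk: "h s < h c" "h Q < h Y" "h P < h Y" using hrk0 by auto
  have rk1: "rank_ok E1 (\<lambda>y. if y = w then 2 * h Y - 1 else 2 * h y)"
    unfolding E1_def by (rule rank_hmE[OF rk _ nd(2) w]) (use nw hrk in auto)
  note m1 = HM[OF net pr Ps cr QY sc QP w rk1[unfolded E1_def]]
  have net1: "is_network X lab (insert w (V - {Z})) E1" using m1(2) unfolding E1_def .
  have pw: "parents E1 w = {Q,P}" "children E1 w = {Y}" using m1(3,4) unfolding E1_def by auto
  have scE1: "(s,c) \<in> E1" unfolding E1_def hmE_def by simp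
  have PYE1: "(P,Y) \<notin> E1" unfolding E1_def hmE_def using PY Ps nw by auto
  have Z1: "Z \<notin> insert w (V - {Z})" using nw by auto
  define E2 where "E2 = E - {(P,Z),(Q,Y)} \<union> {(P,Y),(Q,Z)}"
  have E2eq: "hmE E1 Q w P Y s c Z = E2"
  proof (rule set_eqI)
    fix e :: "nat \<times> nat"
    obtain a b where e: "e = (a,b)" by (cases e)
    have "(a,b) \<in> E \<Longrightarrow> a \<noteq> w \<and> b \<noteq> w" using nd(2) w by auto
    then show "e \<in> hmE E1 Q w P Y s c Z \<longleftrightarrow> e \<in> E2"
      unfolding e E1_def E2_def hmE_def using rf(1,2,3) nw sc YZ QP Qs Ps rf(10,11,12) QY
      by auto
  qed
  have rk2: "rank_ok (hmE E1 Q w P Y s c Z) h"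
    unfolding E2eq E2_def by (rule rank_mono[OF rk]) auto
  have ne: "(s,c) \<noteq> (Q,w)" "(s,c) \<noteq> (P,w)" "(s,c) \<noteq> (w,Y)" using nw by auto
  note m2 = HM[OF net1 pw(1) QP pw(2) scE1 ne PYE1 Qs[symmetric] Z1 rk2]
  have V2: "insert Z (insert w (V - {Z}) - {w}) = V" using rf(8) nw w by auto
  have s1: "((V,E),(insert w (V - {Z}), E1)) \<in> head_step X lab" using m1(1) unfolding E1_def .
  have s2: "((insert w (V - {Z}), E1),(V, E2)) \<in> head_step X lab"
    using m2(1) unfolding E2eq V2 .
  show "((V,E),(V, E - {(P,Z),(Q,Y)} \<union> {(P,Y),(Q,Z)})) \<in> head_step X lab ^^ 2"
    using rp2[OF s1 s2] unfolding E2_def .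
  show "is_network X lab V (E - {(P,Z),(Q,Y)} \<union> {(P,Y),(Q,Z)})"
    using m2(2) unfolding E2eq V2 E2_def .
qed

lemma rp4: "(A,B) \<in> (R::('a\<times>'a) set) \<Longrightarrow> (B,C) \<in> R ^^ 2 \<Longrightarrow> (C,D) \<in> R \<Longrightarrow> (A,D) \<in> R ^^ 4"
proof -
  assume 1: "(A,B) \<in> R" and 2: "(B,C) \<in> R ^^ 2" and 3: "(C,D) \<in> R"
  have "(A,D) \<in> R ^^ ((1+2)+1)" by (rule rp_add[OF rp_add[OF rp1[OF 1] 2] rp1[OF 3]])
  moreover have eq: "(1+2)+1 = (4::nat)" by simp
  ultimately show ?thesis by (simp only: eq)
qed

lemma PSP:
  fixes X :: "'x set"
  assumes net: "is_network X lab V E"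
    and pr: "parents E r = {p,q}" and pq: "p \<noteq> q" and cr: "children E r = {c}"
    and ab: "(a1,b1) \<in> E" and QY: "(Q,Y) \<in> E"
    and rn: "r \<noteq> a1" "r \<noteq> b1" "r \<noteq> Q" "r \<noteq> Y"
    and qc: "(q,c) \<notin> E" and a1p: "a1 \<noteq> p" and Qa1: "Q \<noteq> a1" and Qp: "Q \<noteq> p"
    and pb: "(p,b1) \<notin> E" and aY: "(a1,Y) \<notin> E" and Qb: "(Q,b1) \<notin> E"
    and qcn: "(q,c) \<noteq> (Q,Y)" "(q,c) \<noteq> (Q,b1)" "(q,c) \<noteq> (a1,Y)"
    and w: "w \<notin> V" and rk: "rank_ok (E \<union> {(p,b1),(Q,b1),(a1,Y)}) h"
  shows "((V,E),(V, E - {(a1,b1),(Q,Y)} \<union> {(a1,Y),(Q,b1)})) \<in> head_step X lab ^^ 4"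
proof -
  note rf = ret_facts[OF net pr cr]
  note nd = netD[OF net]
  have inV: "a1 \<in> V" "b1 \<in> V" "Q \<in> V" "Y \<in> V" using ab QY nd(2) by auto
  have nw: "p \<noteq> w" "q \<noteq> w" "r \<noteq> w" "c \<noteq> w" "a1 \<noteq> w" "b1 \<noteq> w" "Q \<noteq> w" "Y \<noteq> w"
    using rf(6-9) inV w by auto
  have Ew: "\<And>s t. (s,t) \<in> E \<Longrightarrow> s \<noteq> w \<and> t \<noteq> w" using nd(2) w by auto
  have hr: "h q < h r" "h r < h c" "h a1 < h b1" "h p < h b1" "h Q < h b1" "h a1 < h Y" "h Q < h Y"
    using rk rf(2,3) ab QY unfolding rank_ok_def by auto
  define E1 where "E1 = hmE E p r q c a1 b1 w"
  have rk1: "rank_ok E1 (\<lambda>y. if y = w then 2 * h b1 - 1 else 2 * h y)"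
    unfolding E1_def by (rule rank_hmE[OF rk _ nd(2) w]) (use nw hr in auto)
  have abn: "(a1,b1) \<noteq> (p,r)" "(a1,b1) \<noteq> (q,r)" "(a1,b1) \<noteq> (r,c)" using rn by auto
  note m1 = HM[OF net pr pq cr ab abn qc a1p w rk1[unfolded E1_def]]
  define V1 where "V1 = insert w (V - {r})"
  have net1: "is_network X lab V1 E1" using m1(2) unfolding E1_def V1_def .
  have pw1: "parents E1 w = {a1,p}" "children E1 w = {b1}" using m1(3,4) unfolding E1_def by auto
  have a1pne: "a1 \<noteq> p" by (rule a1p)
  have QYE1: "(Q,Y) \<in> E1" unfolding E1_def hmE_def using QY rn Qa1 by auto
  have QYn: "(Q,Y) \<noteq> (a1,w)" "(Q,Y) \<noteq> (p,w)" "(Q,Y) \<noteq> (w,b1)" using nw by auto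
  have pb1: "(p,b1) \<notin> E1" unfolding E1_def hmE_def using pb pq nw by auto
  have aY1: "(a1,Y) \<notin> E1" unfolding E1_def hmE_def using aY qcn nw by auto
  have r1: "r \<notin> V1" unfolding V1_def using nw by auto
  define h1 where "h1 = (\<lambda>y. if y = w then 2 * h b1 - 1 else 2 * h y)"
  have rkS: "rank_ok (E1 \<union> {(a1,Y),(Q,w)}) h1"
    unfolding rank_ok_def
  proof (intro allI impI)
    fix s t assume "(s,t) \<in> E1 \<union> {(a1,Y),(Q,w)}"
    then consider "(s,t) \<in> E1" | "s = a1" "t = Y" | "s = Q" "t = w" by auto
    then show "h1 s < h1 t"
    proof cases
      case 1 then show ?thesis using rk1 unfolding rank_ok_def h1_def by blast
    next
      case 2 then show ?thesis using hr nw unfolding h1_def by simp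
    next
      case 3 then show ?thesis using hr nw unfolding h1_def by simp
    qed
  qed
  note m2 = SW[OF net1 pw1(1) a1pne pw1(2) QYE1 QYn pb1 Qa1 Qp aY1 r1 rkS]
  define E3 where "E3 = E1 - {(a1,w),(Q,Y)} \<union> {(a1,Y),(Q,w)}"
  have net3: "is_network X lab V1 E3" using m2(2) unfolding E3_def .
  have e1w: "\<And>s. (s,w) \<in> E1 \<longleftrightarrow> s = a1 \<or> s = p" using pw1(1) unfolding parents_def by blast
  have e1w': "\<And>t. (w,t) \<in> E1 \<longleftrightarrow> t = b1" using pw1(2) unfolding children_def by blast
  have pw3: "parents E3 w = {p,Q}"
  proof (rule set_eqI)
    fix s show "s \<in> parents E3 w \<longleftrightarrow> s \<in> {p,Q}"
      using e1w[of s] nw a1p unfolding parents_def E3_def by auto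
  qed
  have cw3: "children E3 w = {b1}"
  proof (rule set_eqI)
    fix t show "t \<in> children E3 w \<longleftrightarrow> t \<in> {b1}"
      using e1w'[of t] nw unfolding children_def E3_def by auto
  qed
  have qcE3: "(q,c) \<in> E3" unfolding E3_def E1_def hmE_def using qcn nw by auto
  have qcn3: "(q,c) \<noteq> (p,w)" "(q,c) \<noteq> (Q,w)" "(q,c) \<noteq> (w,b1)" using nw by auto
  have Qb3: "(Q,b1) \<notin> E3" unfolding E3_def E1_def hmE_def using Qb Qa1 Qp qcn nw by auto
  have r3: "r \<notin> V1" by (rule r1)
  define T where "T = E - {(a1,b1),(Q,Y)} \<union> {(a1,Y),(Q,b1)}"
  have wnE: "(a1,w) \<notin> E" "(p,w) \<notin> E" "(Q,w) \<notin> E" "(w,b1) \<notin> E" using Ew by blast+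
  define D where "D = E - {(p,r),(q,r),(r,c),(a1,b1),(Q,Y)}"
  have wD: "(s,t) \<in> D \<Longrightarrow> s \<noteq> w \<and> t \<noteq> w" for s t using Ew unfolding D_def by blast
  have qcD: "(q,c) \<notin> D" using qc unfolding D_def by blast
  have E3eq: "E3 = D \<union> {(q,c),(w,b1),(p,w),(a1,Y),(Q,w)}"
  proof -
    have "E1 = (E - {(p,r),(q,r),(r,c),(a1,b1)}) \<union> {(q,c),(a1,w),(w,b1),(p,w)}"
      unfolding E1_def hmE_def ..
    then have "E3 = ((E - {(p,r),(q,r),(r,c),(a1,b1)}) \<union> {(q,c),(a1,w),(w,b1),(p,w)}) - {(a1,w),(Q,Y)} \<union> {(a1,Y),(Q,w)}"
      unfolding E3_def by simp
    also have "\<dots> = D \<union> {(q,c),(w,b1),(p,w),(a1,Y),(Q,w)}"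
      unfolding D_def using qcn nw a1p wnE by auto
    finally show ?thesis .
  qed
  have Teq: "hmE E3 p w Q b1 q c r = T"
  proof -
    have "hmE E3 p w Q b1 q c r = (D \<union> {(q,c),(w,b1),(p,w),(a1,Y),(Q,w)}) - {(p,w),(Q,w),(w,b1),(q,c)} \<union> {(Q,b1),(q,r),(r,c),(p,r)}"
      unfolding hmE_def E3eq ..
    also have "\<dots> = D \<union> {(a1,Y),(Q,b1),(q,r),(r,c),(p,r)}"
      using wD qcD qcn nw by auto
    also have "\<dots> = T"
      unfolding D_def T_def using rf(1,2,3) rn by auto
    finally show ?thesis .
  qed
  have rk3: "rank_ok (hmE E3 p w Q b1 q c r) h"
    unfolding Teq T_def by (rule rank_mono[OF rk]) auto
  have pQ: "p \<noteq> Q" using Qp by auto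
  note m3 = HM[OF net3 pw3 pQ cw3 qcE3 qcn3 Qb3 _ r3 rk3]
  have V4: "insert r (V1 - {w}) = V" unfolding V1_def using rf(8) nw w by auto
  have s1: "((V,E),(V1,E1)) \<in> head_step X lab" using m1(1) unfolding E1_def V1_def .
  have s2: "((V1,E1),(V1,E3)) \<in> head_step X lab ^^ 2" using m2(1) unfolding E3_def .
  have s3: "((V1,E3),(V,T)) \<in> head_step X lab" using m3(1) pq unfolding Teq V4 by auto
  show ?thesis using rp4[OF s1 s2 s3] unfolding T_def .
qed

lemma PSP2:
  fixes X :: "'x set"
  assumes net: "is_network X lab V E"
    and pZ: "parents E Z = {P,s}" and Ps: "P \<noteq> s" and cZ: "children E Z = {r0}"
    and pr0: "parents E r0 = {Z,s}" and cr0: "children E r0 = {c0}"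
    and al: "(a,l) \<in> E" "(a,l) \<noteq> (Z,r0)" "(a,l) \<noteq> (s,r0)" "(a,l) \<noteq> (r0,c0)"
    and sc0: "(s,c0) \<notin> E" and aZ: "a \<noteq> Z" and as: "a \<noteq> s" and lZ: "l \<noteq> Z"
    and QY: "(Q,Y) \<in> E" "(Q,Y) \<noteq> (a,l)" "Q \<noteq> r0" "Y \<noteq> r0" "Y \<noteq> Z"
    and QP: "Q \<noteq> P" and Qs: "Q \<noteq> s" and PY: "(P,Y) \<notin> E" "(P,Y) \<noteq> (s,c0)" "(P,Y) \<noteq> (a,l)"
    and scQY: "(s,c0) \<noteq> (Q,Y)"
    and w: "w \<notin> V" and rk: "rank_ok (E \<union> {(Z,l),(P,Y),(Q,Z)}) h"
  shows "((V,E),(V, E - {(P,Z),(Q,Y)} \<union> {(P,Y),(Q,Z)})) \<in> head_step X lab ^^ 4"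
proof -
  note rf = ret_facts[OF net pZ cZ]
  note rf0 = ret_facts[OF net pr0 cr0]
  note nd = netD[OF net]
  have Zs: "Z \<noteq> s" using rf(2) acyc_irr[OF nd(3)] by auto
  have inV: "a \<in> V" "l \<in> V" "Q \<in> V" "Y \<in> V" using al QY nd(2) by auto
  have nw: "P \<noteq> w" "s \<noteq> w" "Z \<noteq> w" "r0 \<noteq> w" "c0 \<noteq> w" "a \<noteq> w" "l \<noteq> w" "Q \<noteq> w" "Y \<noteq> w"
    using rf(6-9) rf0(9) inV w by auto
  have Ew: "\<And>s t. (s,t) \<in> E \<Longrightarrow> s \<noteq> w \<and> t \<noteq> w" using nd(2) w by auto
  have c0Z: "c0 \<noteq> Z"
  proof
    assume "c0 = Z"
    then have "(Z,Z) \<in> E\<^sup>+" using rf(3) rf0(3) by auto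
    then show False using nd(3) unfolding acyclic_def by blast
  qed
  have hr: "h s < h r0" "h r0 < h c0" "h a < h l" "h Z < h l" "h P < h Y" "h Q < h Z"
    using rk rf0(2,3) al(1) unfolding rank_ok_def by auto
  define E1 where "E1 = hmE E Z r0 s c0 a l w"
  define h1 where "h1 = (\<lambda>y. if y = w then 2 * h l - 1 else 2 * h y)"
  have rk1: "rank_ok E1 h1"
    unfolding E1_def h1_def by (rule rank_hmE[OF rk _ nd(2) w]) (use nw hr in auto)
  have Zs': "Z \<noteq> s" by (rule Zs)
  note m1 = HM[OF net pr0 Zs' cr0 al sc0 aZ w rk1[unfolded E1_def]]
  define V1 where "V1 = insert w (V - {r0})"
  have net1: "is_network X lab V1 E1" using m1(2) unfolding E1_def V1_def .
  have pw1: "parents E1 w = {a,Z}" "children E1 w = {l}" using m1(3,4) unfolding E1_def by auto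
  have pZ1: "parents E1 Z = {P,s}"
  proof (rule set_eqI)
    fix y show "y \<in> parents E1 Z \<longleftrightarrow> y \<in> {P,s}"
      using pZ lZ nw c0Z rf(12) Zs unfolding parents_def E1_def hmE_def by auto
  qed
  have cZ1: "children E1 Z = {w}"
  proof (rule set_eqI)
    fix y show "y \<in> children E1 Z \<longleftrightarrow> y \<in> {w}"
      using cZ aZ Zs nw unfolding children_def E1_def hmE_def by auto
  qed
  have QYE1: "(Q,Y) \<in> E1" unfolding E1_def hmE_def using QY by auto
  have QYn: "(Q,Y) \<noteq> (P,Z)" "(Q,Y) \<noteq> (s,Z)" "(Q,Y) \<noteq> (Z,w)" using QY nw by auto
  have sw1: "(s,w) \<notin> E1" using pw1(1) as Zs unfolding parents_def by auto
  have PY1: "(P,Y) \<notin> E1" unfolding E1_def hmE_def using PY nw by auto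
  have r01: "r0 \<notin> V1" unfolding V1_def using nw by auto
  have rkS: "rank_ok (E1 \<union> {(P,Y),(Q,Z)}) h1"
    unfolding rank_ok_def
  proof (intro allI impI)
    fix x y assume "(x,y) \<in> E1 \<union> {(P,Y),(Q,Z)}"
    then consider "(x,y) \<in> E1" | "x = P" "y = Y" | "x = Q" "y = Z" by auto
    then show "h1 x < h1 y"
    proof cases
      case 1 then show ?thesis using rk1 unfolding rank_ok_def by blast
    next
      case 2 then show ?thesis using hr nw unfolding h1_def by simp
    next
      case 3 then show ?thesis using hr nw unfolding h1_def by simp
    qed
  qed
  note m2 = SW[OF net1 pZ1 Ps cZ1 QYE1 QYn sw1 QP Qs PY1 r01 rkS]
  define E3 where "E3 = E1 - {(P,Z),(Q,Y)} \<union> {(P,Y),(Q,Z)}"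
  have net3: "is_network X lab V1 E3" using m2(2) unfolding E3_def .
  have e1w: "\<And>x. (x,w) \<in> E1 \<longleftrightarrow> x = a \<or> x = Z" using pw1(1) unfolding parents_def by blast
  have e1w': "\<And>t. (w,t) \<in> E1 \<longleftrightarrow> t = l" using pw1(2) unfolding children_def by blast
  have pw3: "parents E3 w = {Z,a}"
  proof (rule set_eqI)
    fix x show "x \<in> parents E3 w \<longleftrightarrow> x \<in> {Z,a}"
      using e1w[of x] nw unfolding parents_def E3_def by auto
  qed
  have cw3: "children E3 w = {l}"
  proof (rule set_eqI)
    fix t show "t \<in> children E3 w \<longleftrightarrow> t \<in> {l}"
      using e1w'[of t] nw unfolding children_def E3_def by auto
  qed
  have sc3: "(s,c0) \<in> E3" unfolding E3_def E1_def hmE_def using scQY Ps by auto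
  have scn3: "(s,c0) \<noteq> (Z,w)" "(s,c0) \<noteq> (a,w)" "(s,c0) \<noteq> (w,l)" using nw by auto
  have al3: "(a,l) \<notin> E3" unfolding E3_def E1_def hmE_def using PY(3) lZ nw sc0 al(1) by auto
  have wnE: "(a,w) \<notin> E" "(Z,w) \<notin> E" "(w,l) \<notin> E" using Ew by blast+
  define D where "D = E - {(Z,r0),(s,r0),(r0,c0),(a,l),(P,Z),(Q,Y)}"
  define T where "T = E - {(P,Z),(Q,Y)} \<union> {(P,Y),(Q,Z)}"
  have wD: "(x,y) \<in> D \<Longrightarrow> x \<noteq> w \<and> y \<noteq> w" for x y using Ew unfolding D_def by blast
  have scD: "(s,c0) \<notin> D" using sc0 unfolding D_def by blast
  have E3eq: "E3 = D \<union> {(s,c0),(a,w),(w,l),(Z,w),(P,Y),(Q,Z)}"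
  proof -
    have "E3 = ((E - {(Z,r0),(s,r0),(r0,c0),(a,l)}) \<union> {(s,c0),(a,w),(w,l),(Z,w)}) - {(P,Z),(Q,Y)} \<union> {(P,Y),(Q,Z)}"
      unfolding E3_def E1_def hmE_def ..
    also have "\<dots> = D \<union> {(s,c0),(a,w),(w,l),(Z,w),(P,Y),(Q,Z)}"
      unfolding D_def using scQY Ps nw by auto
    finally show ?thesis .
  qed
  have Teq: "hmE E3 Z w a l s c0 r0 = T"
  proof -
    have "hmE E3 Z w a l s c0 r0 = (D \<union> {(s,c0),(a,w),(w,l),(Z,w),(P,Y),(Q,Z)}) - {(Z,w),(a,w),(w,l),(s,c0)} \<union> {(a,l),(s,r0),(r0,c0),(Z,r0)}"
      unfolding hmE_def E3eq ..
    also have "\<dots> = D \<union> {(P,Y),(Q,Z),(a,l),(s,r0),(r0,c0),(Z,r0)}"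
      using wD scD PY(2) c0Z nw as by auto
    also have "\<dots> = T"
      unfolding D_def T_def using rf0(1,2,3) QY al lZ rf0(10,11,12) rf(10,11,12) c0Z Zs by auto
    finally show ?thesis .
  qed
  have rk3: "rank_ok (hmE E3 Z w a l s c0 r0) h"
    unfolding Teq T_def by (rule rank_mono[OF rk]) auto
  note m3 = HM[OF net3 pw3 aZ[symmetric] cw3 sc3 scn3 al3 Zs[symmetric] r01 rk3]
  have V4: "insert r0 (V1 - {w}) = V" unfolding V1_def using rf0(8) nw w by auto
  have s1: "((V,E),(V1,E1)) \<in> head_step X lab" using m1(1) unfolding E1_def V1_def .
  have s2: "((V1,E1),(V1,E3)) \<in> head_step X lab ^^ 2" using m2(1) unfolding E3_def .
  have s3: "((V1,E3),(V,T)) \<in> head_step X lab" using m3(1) unfolding Teq V4 .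
  show ?thesis using rp4[OF s1 s2 s3] unfolding T_def .
qed




lemma fin_par: "is_network X lab V E \<Longrightarrow> finite (parents E y)"
  using netD(1,2)[of X lab V E] by (auto simp: parents_def intro: finite_subset[of _ V])

lemma fin_ch: "is_network X lab V E \<Longrightarrow> finite (children E y)"
  using netD(1,2)[of X lab V E] by (auto simp: children_def intro: finite_subset[of _ V])

lemma card2_eq: "finite S \<Longrightarrow> card S = 2 \<Longrightarrow> a \<in> S \<Longrightarrow> b \<in> S \<Longrightarrow> a \<noteq> b \<Longrightarrow> S = {a,b}"
proof -
  assume f: "finite S" and c: "card S = 2" and ab: "a \<in> S" "b \<in> S" "a \<noteq> b"
  have "card {a,b} = card S" using c ab(3) by simp
  moreover have "{a,b} \<subseteq> S" using ab by auto
  ultimately show "S = {a,b}" using card_subset_eq[OF f] by metis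
qed

lemma split_children:
  assumes "split_node E y" "(y,b1) \<in> E" "(y,b2) \<in> E" "b1 \<noteq> b2"
  shows "children E y = {b1,b2}"
proof -
  have c: "card (children E y) = 2" using assms(1) by (simp add: split_node_def outdeg_def)
  then have "finite (children E y)" by (metis card.infinite zero_neq_numeral)
  then show ?thesis using card2_eq[OF _ c] assms(2-4) by (auto simp: children_def)
qed

lemma split_parent:
  assumes "split_node E y" "(a,y) \<in> E"
  shows "parents E y = {a}"
proof -
  have "card (parents E y) = 1" using assms(1) by (simp add: split_node_def indeg_def)
  then obtain z where "parents E y = {z}" by (auto simp: card_Suc_eq)
  then show ?thesis using assms(2) by (auto simp: parents_def)
qed

lemma ret_parents:
  assumes "reticulation E y" "(p,y) \<in> E"
  obtains s where "parents E y = {p,s}" "p \<noteq> s"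
proof -
  have "card (parents E y) = 2" using assms(1) by (simp add: reticulation_def indeg_def)
  then obtain a b where ab: "parents E y = {a,b}" "a \<noteq> b" by (auto simp: card_2_iff)
  have "p \<in> {a,b}" using assms(2) ab(1) by (auto simp: parents_def)
  then show ?thesis using ab that by (metis insert_commute insertE singletonD)
qed

lemma ret_child:
  assumes "reticulation E y"
  obtains c where "children E y = {c}"
proof -
  have "card (children E y) = 1" using assms(1) by (simp add: reticulation_def outdeg_def)
  then show ?thesis using that by (auto simp: card_Suc_eq)
qed

lemma node_inV: "is_network X lab V E \<Longrightarrow> (a,b) \<in> E \<Longrightarrow> a \<in> V \<and> b \<in> V"
  using netD(2) by blast

lemma two_parents:
  assumes net: "is_network X lab V E" and "(p,y) \<in> E" "(q,y) \<in> E" "p \<noteq> q"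
  shows "reticulation E y" "parents E y = {p,q}"
proof -
  have yV: "y \<in> V" using node_inV[OF net assms(2)] by blast
  have sub: "{p,q} \<subseteq> parents E y" using assms by (auto simp: parents_def)
  have "2 \<le> indeg E y" unfolding indeg_def using card_mono[OF fin_par[OF net] sub] assms(4) by simp
  then show r: "reticulation E y" using netD(7)[OF net] yV by (auto simp: split_node_def)
  then have "card (parents E y) = 2" by (simp add: reticulation_def indeg_def)
  then show "parents E y = {p,q}" using card2_eq[OF fin_par[OF net]] sub assms(4) by auto
qed

lemma two_children:
  assumes net: "is_network X lab V E" and "(y,b1) \<in> E" "(y,b2) \<in> E" "b1 \<noteq> b2"
  shows "split_node E y" "children E y = {b1,b2}"
proof -
  have yV: "y \<in> V" using node_inV[OF net assms(2)] by blast
  have sub: "{b1,b2} \<subseteq> children E y" using assms by (auto simp: children_def)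
  have "2 \<le> outdeg E y" unfolding outdeg_def using card_mono[OF fin_ch[OF net] sub] assms(4) by simp
  then show r: "split_node E y" using netD(7)[OF net] yV by (auto simp: reticulation_def)
  then show "children E y = {b1,b2}" using split_children assms(2-4) by blast
qed

lemma nonret_parent:
  assumes net: "is_network X lab V E" and "(a,y) \<in> E" "\<not> reticulation E y"
  shows "parents E y = {a}"
proof -
  have yV: "y \<in> V" using node_inV[OF net assms(2)] by blast
  have "a \<in> parents E y" using assms(2) by (simp add: parents_def)
  then have "1 \<le> indeg E y" unfolding indeg_def using fin_par[OF net]
    by (metis One_nat_def Suc_leI card_gt_0_iff empty_iff)
  then have "indeg E y = 1" using netD(7)[OF net] yV assms(3) by (auto simp: split_node_def)
  then obtain z where "parents E y = {z}" by (auto simp: indeg_def card_Suc_eq)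
  then show ?thesis using assms(2) by (auto simp: parents_def)
qed

lemma uniq_parent_reach:
  assumes "parents E y = {a}" "(z,y) \<in> E\<^sup>*" "z \<noteq> y"
  shows "(z,a) \<in> E\<^sup>*"
  using assms(2,3)
proof (cases rule: rtranclE)
  case (step y') then show ?thesis using assms(1) by (auto simp: parents_def)
qed simp

lemma acyc_back: "acyclic E \<Longrightarrow> (s,t) \<in> E\<^sup>+ \<Longrightarrow> (t,s) \<notin> E\<^sup>*"
  unfolding acyclic_def by (meson rtrancl_into_trancl2 trancl_rtrancl_trancl)

lemma no_out_reach: "(\<And>t. (l,t) \<notin> E) \<Longrightarrow> (l,z) \<in> E\<^sup>* \<Longrightarrow> z = l"
  by (erule converse_rtranclE) auto

lemma aug:
  assumes net: "is_network X lab V E" and "(aR,u) \<notin> E\<^sup>*" "(x,aL) \<in> E\<^sup>+"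
    "(b,p) \<notin> E\<^sup>*" "(b,u) \<notin> E\<^sup>*"
  shows "\<exists>h. rank_ok (E \<union> {(p,b),(u,aR),(x,aL)}) h"
proof -
  note nd = netD[OF net]
  define G1 where "G1 = insert (u,aR) E"
  have a1: "acyclic G1" unfolding G1_def using nd(3) assms(2) by (simp add: acyclic_insert)
  have xaL1: "(x,aL) \<in> G1\<^sup>+" using assms(3) trancl_mono[of _ E G1] unfolding G1_def by blast
  define G2 where "G2 = insert (x,aL) G1"
  have a2: "acyclic G2" unfolding G2_def using a1 acyc_back[OF a1 xaL1] by (simp add: acyclic_insert)
  have G2s: "G2\<^sup>* = G1\<^sup>*"
    unfolding G2_def rtrancl_insert using xaL1
    by (auto dest: trancl_into_rtrancl intro: rtrancl_trans)
  have G1s: "G1\<^sup>* = E\<^sup>* \<union> {(y,z). (y,u) \<in> E\<^sup>* \<and> (aR,z) \<in> E\<^sup>*}"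
    unfolding G1_def rtrancl_insert ..
  have "(b,p) \<notin> G2\<^sup>*" unfolding G2s G1s using assms(4,5) by auto
  then have a3: "acyclic (insert (p,b) G2)" using a2 by (simp add: acyclic_insert)
  have fE: "finite E" using nd(1,2) by (meson finite_SigmaI finite_subset)
  have eq: "insert (p,b) G2 = E \<union> {(p,b),(u,aR),(x,aL)}" unfolding G2_def G1_def by auto
  show ?thesis using acyclic_rank[of "insert (p,b) G2"] a3 fE unfolding eq by auto
qed

lemma meet:
  assumes net: "is_network X lab V E" and pL: "parents E aL = {u}" and pR: "parents E aR = {x}"
    and nRL: "(aR,aL) \<notin> E\<^sup>*" and nLR: "(aL,aR) \<notin> E\<^sup>*"
    and yR: "(aR,y) \<in> E\<^sup>*" and yL: "(aL,y) \<in> E\<^sup>*"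
  shows "\<exists>m. reticulation E m \<and> (m,y) \<in> E\<^sup>*"
  using yR yL
proof (induction rule: rtrancl_induct)
  case base then show ?case using nLR by simp
next
  case (step y z)
  show ?case
  proof (cases "(aL,y) \<in> E\<^sup>*")
    case True
    then obtain m where "reticulation E m" "(m,y) \<in> E\<^sup>*" using step.IH by blast
    then show ?thesis using step.hyps(2) by (meson rtrancl.rtrancl_into_rtrancl)
  next
    case False
    have "z \<noteq> aL" using step.hyps nRL by (meson rtrancl.rtrancl_into_rtrancl)
    then obtain y' where y': "(aL,y') \<in> E\<^sup>*" "(y',z) \<in> E" using step.prems
      by (metis rtranclE)
    have "y' \<noteq> y" using y'(1) False by blast
    then have "reticulation E z" using two_parents(1)[OF net step.hyps(2) y'(2)] by blast
    then show ?thesis by blast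
  qed
qed

lemma leaf_exists:
  assumes net: "is_network X lab V E"
  obtains l a where "(a,l) \<in> E" "l \<noteq> c'" "\<And>t. (l,t) \<notin> E" "outdeg E l = 0" "indeg E l = 1"
proof -
  note nd = netD[OF net]
  define L where "L = {w \<in> V. indeg E w = 1 \<and> outdeg E w = 0}"
  have "card L = card X" using bij_betw_same_card[OF nd(8)] unfolding L_def by simp
  then have cL: "2 \<le> card L" using nd(5) by simp
  have "\<exists>l \<in> L. l \<noteq> c'"
  proof (rule ccontr)
    assume "\<not> ?thesis"
    then have "L \<subseteq> {c'}" by auto
    then have "card L \<le> 1" using card_mono[of "{c'}" L] by simp
    then show False using cL by simp
  qed
  then obtain l where l: "l \<in> L" "l \<noteq> c'" by blast
  have "card (parents E l) = 1" using l(1) unfolding L_def indeg_def by simp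
  then obtain a where "parents E l = {a}" by (auto simp: card_Suc_eq)
  then have al: "(a,l) \<in> E" by (auto simp: parents_def)
  have "card (children E l) = 0" using l(1) unfolding L_def outdeg_def by simp
  then have "children E l = {}" using fin_ch[OF net] by simp
  then have "\<And>t. (l,t) \<notin> E" by (auto simp: children_def)
  then show ?thesis using that al l(2) l(1) unfolding L_def by blast
qed

lemma exn: "(A,B) \<in> R ^^ n \<Longrightarrow> n \<le> 6 \<Longrightarrow> \<exists>n \<le> 6. (A,B) \<in> R ^^ n" by blast

lemma chD: "children E y = S \<Longrightarrow> (y,t) \<in> E \<Longrightarrow> t \<in> S" by (auto simp: children_def)
lemma paD: "parents E y = S \<Longrightarrow> (t,y) \<in> E \<Longrightarrow> t \<in> S" by (auto simp: parents_def)
lemma chI: "children E y = S \<Longrightarrow> t \<in> S \<Longrightarrow> (y,t) \<in> E" by (auto simp: children_def)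
lemma paI: "parents E y = S \<Longrightarrow> t \<in> S \<Longrightarrow> (t,y) \<in> E" by (auto simp: parents_def)
lemma edge_ne: "(\<And>y. (y,y) \<notin> E) \<Longrightarrow> (a,b) \<in> E \<Longrightarrow> a \<noteq> b" by metis
lemma path2_ne: "acyclic E \<Longrightarrow> (a,b) \<in> E \<Longrightarrow> (b,c) \<in> E \<Longrightarrow> c \<noteq> a"
  unfolding acyclic_def by (metis trancl.simps)
lemma out_ne: "(\<And>t. (l,t) \<notin> E) \<Longrightarrow> (a,t) \<in> E \<Longrightarrow> a \<noteq> l" by metis

lemma rank_from_aug:
  assumes "\<exists>h. rank_ok G h" "H \<subseteq> G" shows "\<exists>h. rank_ok H h"
  using assms rank_mono by blast

lemma core:
  fixes X :: "'x set"
  assumes net: "is_network X lab V E"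
    and nret: "card (reticulations V E) > 0"
    and sx: "split_node E x"
    and xu: "(x, u) \<in> E" and xaR: "(x, aR) \<in> E" and uaR_ne: "u \<noteq> aR"
    and uaL: "(u, aL) \<in> E" and uv: "(u, v) \<in> E" and vaL: "v \<noteq> aL"
    and su: "split_node E u" and LR: "aL \<noteq> aR" and vaR: "v \<noteq> aR"
  shows "\<exists>n \<le> 6. ((V,E),(V, E - {(x,aR),(u,aL)} \<union> {(x,aL),(u,aR)})) \<in> head_step X lab ^^ n"
proof -
  define T where "T = E - {(x,aR),(u,aL)} \<union> {(x,aL),(u,aR)}"
  note nd = netD[OF net]
  have irr: "\<And>y. (y,y) \<notin> E" using acyc_irr[OF nd(3)] .
  obtain w where w: "w \<notin> V" using nd(1) infinite_UNIV_nat ex_new_if_finite by blast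
  have xne: "x \<noteq> u" "x \<noteq> aR" "u \<noteq> aL" "u \<noteq> v" using irr xu xaR uaL uv by auto
  have cx: "children E x = {u,aR}" using split_children[OF sx xu xaR uaR_ne] .
  have pu: "parents E u = {x}" using split_parent[OF su xu] .
  have aLv: "aL \<noteq> v" using vaL by simp
  have cu: "children E u = {aL,v}" by (rule split_children[OF su uaL uv aLv])
  have xaL: "(x,aL) \<notin> E"
  proof
    assume "(x,aL) \<in> E"
    then have "aL \<in> children E x" by (simp add: children_def)
    then show False using cx xne(3) LR by auto
  qed
  have xaLp: "(x,aL) \<in> E\<^sup>+" by (rule trancl_into_trancl[OF r_into_trancl[OF xu] uaL])
  have xaLne: "x \<noteq> aL" using xaLp nd(3) unfolding acyclic_def by blast
  have uaR: "(u,aR) \<notin> E"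
  proof
    assume "(u,aR) \<in> E"
    then have "aR \<in> children E u" by (simp add: children_def)
    then show False using cu LR vaR by auto
  qed
  have aRu: "(aR,u) \<notin> E\<^sup>*"
  proof
    assume "(aR,u) \<in> E\<^sup>*"
    then have "(aR,x) \<in> E\<^sup>*" using uniq_parent_reach[OF pu] uaR_ne by blast
    then show False using acyc_back[OF nd(3)] xaR by blast
  qed
  have aLu: "(aL,u) \<notin> E\<^sup>*"
  proof
    assume "(aL,u) \<in> E\<^sup>*"
    then have "(aL,x) \<in> E\<^sup>*" using uniq_parent_reach[OF pu] xne(3) by blast
    then show False using acyc_back[OF nd(3) xaLp] by blast
  qed
  have aLx: "(aL,x) \<notin> E\<^sup>*" using acyc_back[OF nd(3) xaLp] .
  have nrx: "\<not> reticulation E x" using sx by (simp add: split_node_def reticulation_def)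
  have nru: "\<not> reticulation E u" using su by (simp add: split_node_def reticulation_def)
  have rk2: "\<exists>h. rank_ok (E \<union> {(x,aL),(u,aR)}) h"
    by (rule rank_from_aug[OF aug[OF net aRu xaLp aLx aLu]]) auto
  have retne: "\<And>y. reticulation E y \<Longrightarrow> y \<noteq> x \<and> y \<noteq> u" using nrx nru by auto
  show ?thesis
  proof (cases "reticulation E aR")
    case retR: True
    obtain s where pR: "parents E aR = {x,s}" and xs: "x \<noteq> s" using ret_parents[OF retR xaR] .
    obtain c where cR: "children E aR = {c}" using ret_child[OF retR] .
    have saR: "(s,aR) \<in> E" using pR by (auto simp: parents_def)
    have aRc: "(aR,c) \<in> E" using cR by (auto simp: children_def)
    have su_ne: "s \<noteq> u" using saR uaR by metis
    have us_ne: "u \<noteq> s" using su_ne by metis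
    have ux_ne: "u \<noteq> x" using xne(1) by metis
    show ?thesis
    proof (cases "(s,c) \<in> E")
      case False
      obtain h where h: "rank_ok (E \<union> {(x,aL),(u,aR)}) h" using rk2 by blast
      have QY: "(u,aL) \<noteq> (x,aR)" "(u,aL) \<noteq> (s,aR)" "(u,aL) \<noteq> (aR,c)" using xne LR uaR_ne by auto
      have st: "((V,E),(V,T)) \<in> head_step X lab ^^ 2"
        using SW(1)[OF net pR xs cR uaL QY False ux_ne us_ne xaL w h]
        unfolding T_def .
      show ?thesis by (rule exn[OF st[unfolded T_def]]) simp
    next
      case sc: True
      have aRc_ne: "aR \<noteq> c" by (rule edge_ne[OF irr aRc])
      have aRs: "aR \<noteq> s" using edge_ne[OF irr saR] by metis
      have pc: "parents E c = {aR,s}" by (rule two_parents(2)[OF net aRc sc aRs])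
      have rc: "reticulation E c" by (rule two_parents(1)[OF net aRc sc aRs])
      obtain c' where cc: "children E c = {c'}" using ret_child[OF rc] .
      have cc': "(c,c') \<in> E" by (rule chI[OF cc]) simp
      have cs: "children E s = {aR,c}" by (rule two_children(2)[OF net saR sc aRc_ne])
      have c_ne_aL: "c \<noteq> aL"
      proof
        assume "c = aL"
        then have "u \<in> parents E c" using uaL by (simp add: parents_def)
        then show False using pc uaR_ne us_ne by auto
      qed
      have c_ne: "c \<noteq> x" "c \<noteq> u" using retne[OF rc] by auto
      have c'c: "c' \<noteq> c" using edge_ne[OF irr cc'] by metis
      have c'aR: "c' \<noteq> aR" by (rule path2_ne[OF nd(3) aRc cc'])
      have aRc': "(aR,c') \<notin> E"
      proof
        assume "(aR,c') \<in> E" then have "c' \<in> {c}" by (rule chD[OF cR])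
        then show False using c'c by simp
      qed
      have sc': "(s,c') \<notin> E"
      proof
        assume "(s,c') \<in> E" then have "c' \<in> {aR,c}" by (rule chD[OF cs])
        then show False using c'c c'aR by simp
      qed
      show ?thesis
      proof (cases "(aL,s) \<in> E\<^sup>*")
        case False
        obtain h where h0: "rank_ok (E \<union> {(s,aL),(u,aR),(x,aL)}) h"
          using aug[OF net aRu xaLp False aLu] by blast
        have h: "rank_ok (E \<union> {(s,aL),(x,aL),(u,aR)}) h" by (rule rank_mono[OF h0]) auto
        have pr': "parents E c = {s,aR}" using pc by (simp add: insert_commute)
        have saR_ne: "s \<noteq> aR" using aRs by metis
        have rn: "c \<noteq> u" "c \<noteq> aL" "c \<noteq> x" "c \<noteq> aR" using c_ne c_ne_aL aRc_ne by metis+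
        have sne: "u \<noteq> s" "x \<noteq> u" "x \<noteq> s" using us_ne xne xs by metis+
        have pb: "(s,aL) \<notin> E"
        proof
          assume "(s,aL) \<in> E" then have "aL \<in> {aR,c}" by (rule chD[OF cs])
          then show False using LR c_ne_aL by auto
        qed
        have qcn: "(aR,c') \<noteq> (x,aR)" "(aR,c') \<noteq> (x,aL)" "(aR,c') \<noteq> (u,aR)" using xne uaR_ne by auto
        have st: "((V,E),(V, E - {(u,aL),(x,aR)} \<union> {(u,aR),(x,aL)})) \<in> head_step X lab ^^ 4"
          by (rule PSP[OF net pr' saR_ne cc uaL xaR rn aRc' sne pb uaR xaL qcn w h])
        have eqT: "E - {(u,aL),(x,aR)} \<union> {(u,aR),(x,aL)} = T" unfolding T_def by blast
        show ?thesis by (rule exn[OF st[unfolded eqT, unfolded T_def]]) simp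
      next
        case True
        obtain l a where al: "(a,l) \<in> E" "l \<noteq> c'" and noout: "\<And>t. (l,t) \<notin> E"
          using leaf_exists[OF net, of c'] by blast
        have aL_out: "\<exists>t. (aL,t) \<in> E"
          using True saR by (metis converse_rtranclE)
        have l_ne: "l \<noteq> aL" "l \<noteq> c" "l \<noteq> aR" "l \<noteq> u"
          using aL_out out_ne[OF noout cc'] out_ne[OF noout aRc] out_ne[OF noout uaL] noout by metis+
        have a_ne: "a \<noteq> aR"
        proof
          assume "a = aR" then have "l \<in> {c}" using chD[OF cR] al(1) by simp
          then show False using l_ne by simp
        qed
        have a_ne2: "a \<noteq> s"
        proof
          assume "a = s" then have "l \<in> {aR,c}" using chD[OF cs] al(1) by simp
          then show False using l_ne by simp
        qed
        have aln: "(a,l) \<noteq> (aR,c)" "(a,l) \<noteq> (s,c)" "(a,l) \<noteq> (c,c')" using l_ne al(2) by auto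
        have QY: "(u,aL) \<noteq> (a,l)" "u \<noteq> c" "aL \<noteq> c" "aL \<noteq> aR" using l_ne c_ne c_ne_aL LR by auto
        have sne: "u \<noteq> x" "u \<noteq> s" using xne us_ne by metis+
        have PY: "(x,aL) \<noteq> (s,c')" "(x,aL) \<noteq> (a,l)" using xs l_ne by auto
        have scQY: "(s,c') \<noteq> (u,aL)" using us_ne by auto
        have nl1: "(l,aR) \<notin> E\<^sup>*" using no_out_reach[OF noout] l_ne by metis
        have nl2: "(l,u) \<notin> E\<^sup>*" using no_out_reach[OF noout] l_ne by metis
        obtain h where h0: "rank_ok (E \<union> {(aR,l),(u,aR),(x,aL)}) h"
          using aug[OF net aRu xaLp nl1 nl2] by blast
        have h: "rank_ok (E \<union> {(aR,l),(x,aL),(u,aR)}) h" by (rule rank_mono[OF h0]) auto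
        have st: "((V,E),(V,T)) \<in> head_step X lab ^^ 4"
          unfolding T_def
          by (rule PSP2[OF net pR xs cR pc cc al(1) aln sc' a_ne a_ne2 l_ne(3) uaL QY sne xaL PY scQY w h])
        show ?thesis by (rule exn[OF st[unfolded T_def]]) simp
      qed
    qed
  next
    case nretR: False
    have pR: "parents E aR = {x}" by (rule nonret_parent[OF net xaR nretR])
    have us_x: "u \<noteq> x" "x \<noteq> u" using xne(1) by metis+
    show ?thesis
    proof (cases "reticulation E aL")
      case retL: True
      obtain s where pL: "parents E aL = {u,s}" and us: "u \<noteq> s" using ret_parents[OF retL uaL] .
      obtain c where cL: "children E aL = {c}" using ret_child[OF retL] .
      have saL: "(s,aL) \<in> E" by (rule paI[OF pL]) simp
      have aLc: "(aL,c) \<in> E" by (rule chI[OF cL]) simp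
      have sx: "s \<noteq> x" "x \<noteq> s" using saL xaL by metis+
      show ?thesis
      proof (cases "(s,c) \<in> E")
        case False
        obtain h0 where h0: "rank_ok (E \<union> {(x,aL),(u,aR)}) h0" using rk2 by blast
        have h: "rank_ok (E \<union> {(u,aR),(x,aL)}) h0" by (rule rank_mono[OF h0]) auto
        have QY: "(x,aR) \<noteq> (u,aL)" "(x,aR) \<noteq> (s,aL)" "(x,aR) \<noteq> (aL,c)" using xne LR xaLne by auto
        have st: "((V,E),(V, E - {(u,aL),(x,aR)} \<union> {(u,aR),(x,aL)})) \<in> head_step X lab ^^ 2"
          by (rule SW(1)[OF net pL us cL xaR QY False us_x(2) sx(2) uaR w h])
        have eqT: "E - {(u,aL),(x,aR)} \<union> {(u,aR),(x,aL)} = T" unfolding T_def by blast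
        show ?thesis by (rule exn[OF st[unfolded eqT, unfolded T_def]]) simp
      next
        case sc: True
        have aLc_ne: "aL \<noteq> c" by (rule edge_ne[OF irr aLc])
        have aLs: "aL \<noteq> s" using edge_ne[OF irr saL] by metis
        have pc: "parents E c = {aL,s}" by (rule two_parents(2)[OF net aLc sc aLs])
        have rc: "reticulation E c" by (rule two_parents(1)[OF net aLc sc aLs])
        obtain c' where cc: "children E c = {c'}" using ret_child[OF rc] .
        have cc': "(c,c') \<in> E" by (rule chI[OF cc]) simp
        have cs: "children E s = {aL,c}" by (rule two_children(2)[OF net saL sc aLc_ne])
        have c_ne_aR: "c \<noteq> aR" using rc nretR by metis
        have c_ne: "c \<noteq> x" "c \<noteq> u" using retne[OF rc] by auto
        have c'c: "c' \<noteq> c" using edge_ne[OF irr cc'] by metis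
        have c'aL: "c' \<noteq> aL" by (rule path2_ne[OF nd(3) aLc cc'])
        have aLc': "(aL,c') \<notin> E"
        proof
          assume "(aL,c') \<in> E" then have "c' \<in> {c}" by (rule chD[OF cL])
          then show False using c'c by simp
        qed
        have sc': "(s,c') \<notin> E"
        proof
          assume "(s,c') \<in> E" then have "c' \<in> {aL,c}" by (rule chD[OF cs])
          then show False using c'c c'aL by simp
        qed
        show ?thesis
        proof (cases "(aR,s) \<in> E\<^sup>*")
          case False
          obtain h where h0: "rank_ok (E \<union> {(s,aR),(u,aR),(x,aL)}) h"
            using aug[OF net aRu xaLp False aRu] by blast
          have pr': "parents E c = {s,aL}" using pc by (simp add: insert_commute)
          have saL_ne: "s \<noteq> aL" using aLs by metis
          have rn: "c \<noteq> x" "c \<noteq> aR" "c \<noteq> u" "c \<noteq> aL" using c_ne c_ne_aR aLc_ne by metis+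
          have sne: "x \<noteq> s" "u \<noteq> x" "u \<noteq> s" using sx us xne by metis+
          have pb: "(s,aR) \<notin> E"
          proof
            assume "(s,aR) \<in> E" then have "s \<in> {x}" by (rule paD[OF pR])
            then show False using sx by simp
          qed
          have qcn: "(aL,c') \<noteq> (u,aL)" "(aL,c') \<noteq> (u,aR)" "(aL,c') \<noteq> (x,aL)" using xne xaLne by auto
          have st: "((V,E),(V,T)) \<in> head_step X lab ^^ 4"
            unfolding T_def
            by (rule PSP[OF net pr' saL_ne cc xaR uaL rn aLc' sne pb xaL uaR qcn w h0])
          show ?thesis by (rule exn[OF st[unfolded T_def]]) simp
        next
          case True
          obtain l a where al: "(a,l) \<in> E" "l \<noteq> c'" and noout: "\<And>t. (l,t) \<notin> E"
            using leaf_exists[OF net, of c'] by blast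
          have aR_out: "\<exists>t. (aR,t) \<in> E"
          proof (cases "aR = s")
            case True then show ?thesis using saL by blast
          next
            case False
            from \<open>(aR,s) \<in> E\<^sup>*\<close> False show ?thesis by (cases rule: converse_rtranclE) auto
          qed
          then obtain tR where tR: "(aR,tR) \<in> E" by blast
          have l_ne: "l \<noteq> aL" "l \<noteq> c" "l \<noteq> aR" "l \<noteq> u"
            using out_ne[OF noout aLc] out_ne[OF noout cc'] out_ne[OF noout tR] out_ne[OF noout uaL] by metis+
          have a_ne: "a \<noteq> aL"
          proof
            assume "a = aL" then have "l \<in> {c}" using chD[OF cL] al(1) by simp
            then show False using l_ne by simp
          qed
          have a_ne2: "a \<noteq> s"
          proof
            assume "a = s" then have "l \<in> {aL,c}" using chD[OF cs] al(1) by simp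
            then show False using l_ne by simp
          qed
          have aln: "(a,l) \<noteq> (aL,c)" "(a,l) \<noteq> (s,c)" "(a,l) \<noteq> (c,c')" using l_ne al(2) by auto
          have QY: "(x,aR) \<noteq> (a,l)" "x \<noteq> c" "aR \<noteq> c" "aR \<noteq> aL" using l_ne c_ne c_ne_aR LR by auto
          have sne: "x \<noteq> u" "x \<noteq> s" using xne sx by metis+
          have PY: "(u,aR) \<noteq> (s,c')" "(u,aR) \<noteq> (a,l)" using us l_ne by auto
          have scQY: "(s,c') \<noteq> (x,aR)" using sx by auto
          have nl1: "(l,aL) \<notin> E\<^sup>*" using no_out_reach[OF noout] l_ne by metis
          have nl2: "(l,u) \<notin> E\<^sup>*" using no_out_reach[OF noout] l_ne by metis
          obtain h where h0: "rank_ok (E \<union> {(aL,l),(u,aR),(x,aL)}) h"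
            using aug[OF net aRu xaLp nl1 nl2] by blast
          have st: "((V,E),(V, E - {(u,aL),(x,aR)} \<union> {(u,aR),(x,aL)})) \<in> head_step X lab ^^ 4"
            by (rule PSP2[OF net pL us cL pc cc al(1) aln sc' a_ne a_ne2 l_ne(1) xaR QY sne uaR PY scQY w h0])
          have eqT: "E - {(u,aL),(x,aR)} \<union> {(u,aR),(x,aL)} = T" unfolding T_def by blast
          show ?thesis by (rule exn[OF st[unfolded eqT, unfolded T_def]]) simp
        qed
      qed
    next
      case nretL: False
      have pL: "parents E aL = {u}" by (rule nonret_parent[OF net uaL nretL])
      have nRL: "(aR,aL) \<notin> E\<^sup>*"
      proof
        assume "(aR,aL) \<in> E\<^sup>*"
        then have "(aR,u) \<in> E\<^sup>*" using uniq_parent_reach[OF pL] LR by metis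
        then show False using aRu by simp
      qed
      have nLR: "(aL,aR) \<notin> E\<^sup>*"
      proof
        assume "(aL,aR) \<in> E\<^sup>*"
        then have "(aL,x) \<in> E\<^sup>*" using uniq_parent_reach[OF pR] LR by metis
        then show False using aLx by simp
      qed
      have fE: "finite E" using nd(1,2) by (meson finite_SigmaI finite_subset)
      obtain h0 where h0: "rank_ok E h0" using acyclic_rank[OF fE nd(3)] by blast
      define RS where "RS = reticulations V E"
      have RSfin: "finite RS" unfolding RS_def reticulations_def using nd(1) by simp
      have RSne: "RS \<noteq> {}" using nret unfolding RS_def by auto
      define m where "m = Min (h0 ` RS)"
      have "m \<in> h0 ` RS" unfolding m_def using RSfin RSne by simp
      then obtain r where rRS: "r \<in> RS" and hr: "h0 r = m" by blast
      have rmin: "\<And>r'. r' \<in> RS \<Longrightarrow> h0 r \<le> h0 r'" unfolding hr m_def using RSfin by simp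
      have rr: "reticulation E r" "r \<in> V" using rRS unfolding RS_def reticulations_def by auto
      have "card (parents E r) = 2" using rr(1) by (simp add: reticulation_def indeg_def)
      then obtain p1 p2 where p12: "parents E r = {p1,p2}" "p1 \<noteq> p2" by (auto simp: card_2_iff)
      obtain c where cr: "children E r = {c}" using ret_child[OF rr(1)] .
      have p1r: "(p1,r) \<in> E" "(p2,r) \<in> E" using p12(1) by (auto simp: parents_def)
      have rc: "(r,c) \<in> E" by (rule chI[OF cr]) simp
      have r_ne: "r \<noteq> x" "r \<noteq> u" "r \<noteq> aR" "r \<noteq> aL" using retne[OF rr(1)] rr(1) nretR nretL by metis+
      have key: "\<not> ((aR,p) \<in> E\<^sup>* \<and> (aL,p) \<in> E\<^sup>*)" if pr: "(p,r) \<in> E" for p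
      proof
        assume "(aR,p) \<in> E\<^sup>* \<and> (aL,p) \<in> E\<^sup>*"
        then obtain m' where m': "reticulation E m'" "(m',p) \<in> E\<^sup>*"
          using meet[OF net pL pR nRL nLR] by blast
        have mr: "(m',r) \<in> E\<^sup>+" using m'(2) pr by (rule rtrancl_into_trancl1)
        then obtain z where "(m',z) \<in> E" by (metis tranclD)
        then have "m' \<in> V" using node_inV[OF net] by blast
        then have "m' \<in> RS" using m'(1) unfolding RS_def reticulations_def by simp
        then have "h0 r \<le> h0 m'" by (rule rmin)
        moreover have "h0 m' < h0 r" by (rule rank_trancl[OF h0 mr])
        ultimately show False by simp
      qed
      have cne: "c \<noteq> aL" "c \<noteq> aR"
      proof -
        show "c \<noteq> aL"
        proof
          assume "c = aL" then have "r \<in> {u}" using paD[OF pL] rc by simp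
          then show False using r_ne by simp
        qed
        show "c \<noteq> aR"
        proof
          assume "c = aR" then have "r \<in> {x}" using paD[OF pR] rc by simp
          then show False using r_ne by simp
        qed
      qed
      have noU: "False" if "(u,r) \<in> E" "(u,c) \<in> E"
      proof -
        have "r \<in> {aL,v}" using chD[OF cu] that(1) by simp
        then have rv: "r = v" using r_ne by simp
        have "c \<in> {aL,v}" using chD[OF cu] that(2) by simp
        then have "c = v" using cne by simp
        then show False using rv rc irr by metis
      qed
      have not_both: "False" if "(p1,c) \<in> E" "(p2,c) \<in> E"
      proof -
        have "parents E c = {p1,p2}" by (rule two_parents(2)[OF net that p12(2)])
        then have "r \<in> {p1,p2}" using paD rc by metis
        then show False using p1r irr by auto
      qed
      obtain p q where pq: "parents E r = {p,q}" "p \<noteq> q" and qc: "(q,c) \<notin> E" and pu_ne: "p \<noteq> u"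
      proof (cases "(p2,c) \<notin> E \<and> p1 \<noteq> u")
        case True then show ?thesis using that p12 by blast
      next
        case F1: False
        show ?thesis
        proof (cases "(p1,c) \<notin> E \<and> p2 \<noteq> u")
          case True
          have "parents E r = {p2,p1}" "p2 \<noteq> p1" using p12 by (auto simp: insert_commute)
          then show ?thesis using that True by blast
        next
          case F2: False
          have False
          proof (cases "(p2,c) \<in> E")
            case c2: True
            show False
            proof (cases "(p1,c) \<in> E")
              case True then show False using not_both c2 by blast
            next
              case False then have "p2 = u" using F2 by blast
              then show False using noU p1r(2) c2 by blast
            qed
          next
            case False then have "p1 = u" using F1 by blast
            then show False using F2 noU p1r(1) p12(2) by blast
          qed
          then show ?thesis ..
        qed
      qed
      have prE: "(p,r) \<in> E" by (rule paI[OF pq(1)]) simp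
      have px: "p \<noteq> x"
      proof
        assume "p = x" then have "r \<in> {u,aR}" using chD[OF cx] prE by simp
        then show False using r_ne by simp
      qed
      have rn1: "r \<noteq> x" "r \<noteq> aR" "r \<noteq> u" "r \<noteq> aL" using r_ne by metis+
      have rn2: "r \<noteq> u" "r \<noteq> aL" "r \<noteq> x" "r \<noteq> aR" using r_ne by metis+
      have qcn: "(q,c) \<noteq> (u,aL)" "(q,c) \<noteq> (u,aR)" "(q,c) \<noteq> (x,aL)" "(q,c) \<noteq> (x,aR)"
        using qc uaL xaR cne by auto
      show ?thesis
      proof (cases "(aR,p) \<in> E\<^sup>*")
        case False
        obtain h where h: "rank_ok (E \<union> {(p,aR),(u,aR),(x,aL)}) h"
          using aug[OF net aRu xaLp False aRu] by blast
        have sne: "x \<noteq> p" "u \<noteq> x" "u \<noteq> p" using px pu_ne xne by metis+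
        have pb: "(p,aR) \<notin> E"
        proof
          assume "(p,aR) \<in> E" then have "p \<in> {x}" by (rule paD[OF pR])
          then show False using px by simp
        qed
        have st: "((V,E),(V,T)) \<in> head_step X lab ^^ 4"
          unfolding T_def
          by (rule PSP[OF net pq(1,2) cr xaR uaL rn1 qc sne pb xaL uaR qcn(1,2,3) w h])
        show ?thesis by (rule exn[OF st[unfolded T_def]]) simp
      next
        case True
        then have nLp: "(aL,p) \<notin> E\<^sup>*" using key[OF prE] by blast
        obtain h where h0': "rank_ok (E \<union> {(p,aL),(u,aR),(x,aL)}) h"
          using aug[OF net aRu xaLp nLp aLu] by blast
        have h: "rank_ok (E \<union> {(p,aL),(x,aL),(u,aR)}) h" by (rule rank_mono[OF h0']) blast
        have sne: "u \<noteq> p" "x \<noteq> u" "x \<noteq> p" using px pu_ne xne by metis+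
        have pb: "(p,aL) \<notin> E"
        proof
          assume "(p,aL) \<in> E" then have "p \<in> {u}" by (rule paD[OF pL])
          then show False using pu_ne by simp
        qed
        have qcn': "(q,c) \<noteq> (x,aR)" "(q,c) \<noteq> (x,aL)" "(q,c) \<noteq> (u,aR)" using qcn by metis+
        have st: "((V,E),(V, E - {(u,aL),(x,aR)} \<union> {(u,aR),(x,aL)})) \<in> head_step X lab ^^ 4"
          by (rule PSP[OF net pq(1,2) cr uaL xaR rn2 qc sne pb uaR xaL qcn' w h])
        have eqT: "E - {(u,aL),(x,aR)} \<union> {(u,aR),(x,aL)} = T" unfolding T_def by blast
        show ?thesis by (rule exn[OF st[unfolded eqT, unfolded T_def]]) simp
      qed
    qed
  qed
qed

theorem mainTheorem8:
  fixes X :: "'x set" and lab :: "'x \<Rightarrow> nat"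
    and V V' :: "nat set" and E E' :: "(nat \<times> nat) set"
    and x u v aL aR :: nat
  assumes "is_network X lab V E"
    and "card (reticulations V E) > 0"
    and "split_node E x"
    and "(x, u) \<in> E" and "(x, aR) \<in> E" and "u \<noteq> aR"
    and "(u, aL) \<in> E" and "(u, v) \<in> E" and "v \<noteq> aL"
    and "split_node E u"
    and "tail_move X lab V E u v (x, aR) V' E'"
  shows "\<exists>n \<le> 6. \<exists>V'' E''. ((V, E), (V'', E'')) \<in> head_step X lab ^^ n \<and>
           net_iso X lab V'' E'' V' E'"
proof -
  note net = assms(1) and sx = assms(3) and xu = assms(4) and xaR = assms(5) and uaR_ne = assms(6)
    and uaL = assms(7) and uv = assms(8) and vaL = assms(9) and su = assms(10) and tm = assms(11)
  note nd = netD[OF net]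
  have irr: "\<And>y. (y,y) \<notin> E" using acyc_irr[OF nd(3)] .
  have xne: "x \<noteq> u" "u \<noteq> aL" "u \<noteq> v" "x \<noteq> aR" using irr xu uaL uv xaR by metis+
  have aLv: "aL \<noteq> v" using vaL by metis
  have pu: "parents E u = {x}" by (rule split_parent[OF su xu])
  have cu: "children E u = {aL,v}" by (rule split_children[OF su uaL uv aLv])
  have uin: "u \<in> V" using node_inV[OF net xu] by blast
  obtain u' V1 E1 V2 E2 where sd: "subdivide V (E - {(u,v)}) (x,aR) u' V1 E1"
    and sp: "suppress V1 E1 u V2 E2" and u'v: "(u',v) \<notin> E2" and V'eq: "V' = V2"
    and E'eq: "E' = insert (u',v) E2"
    using tm unfolding tail_move_def by blast
  have u'V: "u' \<notin> V" and V1eq: "V1 = insert u' V"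
    and E1eq: "E1 = (E - {(u,v)} - {(x,aR)}) \<union> {(x,u'),(u',aR)}"
    using sd unfolding subdivide_def by auto
  have u'ne: "u' \<noteq> u" "u' \<noteq> x" "u' \<noteq> aR" "u' \<noteq> aL" "u' \<noteq> v"
    using u'V node_inV[OF net xu] node_inV[OF net xaR] node_inV[OF net uaL] node_inV[OF net uv] by metis+
  have Eu': "\<And>t. (u',t) \<notin> E" "\<And>t. (t,u') \<notin> E" using u'V node_inV[OF net] by blast+
  obtain a b where pa: "parents E1 u = {a}" and cb: "children E1 u = {b}" and V2eq: "V2 = V1 - {u}"
    and E2eq: "E2 = E1 - {(a,u),(u,b)} \<union> {(a,b)}"
    using sp unfolding suppress_def by blast
  have "(x,u) \<in> E1" unfolding E1eq using xu xne uaR_ne by auto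
  then have ax: "a = x" using pa by (auto simp: parents_def)
  have "(u,aL) \<in> E1" unfolding E1eq using uaL xne aLv by auto
  then have baL: "b = aL" using cb by (auto simp: children_def)
  have vaR: "v \<noteq> aR"
  proof
    assume "v = aR"
    have "(u',aR) \<in> E2" unfolding E2eq E1eq ax baL using u'ne uaR_ne by auto
    then show False using u'v \<open>v = aR\<close> by simp
  qed
  define T where "T = E - {(x,aR),(u,aL)} \<union> {(x,aL),(u,aR)}"
  define \<phi> where "\<phi> y = (if y = u then u' else y)" for y
  have V'V: "V' = insert u' V - {u}" unfolding V'eq V2eq V1eq ..
  have E'E: "E' = insert (u',v) ((E - {(u,v)} - {(x,aR)}) \<union> {(x,u'),(u',aR)} - {(x,u),(u,aL)} \<union> {(x,aL)})"
    unfolding E'eq E2eq E1eq ax baL ..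
  have iso: "net_iso X lab V T V' E'"
    unfolding net_iso_def
  proof (intro exI[of _ \<phi>] conjI ballI)
    show "bij_betw \<phi> V V'"
      unfolding bij_betw_def
    proof
      show "inj_on \<phi> V" unfolding inj_on_def \<phi>_def using u'V by auto
      show "\<phi> ` V = V'" unfolding V'V \<phi>_def using uin u'V by (auto simp: image_iff)
    qed
  next
    fix y assume "y \<in> X"
    then have "lab y \<in> {w \<in> V. indeg E w = 1 \<and> outdeg E w = 0}" using nd(8) by (meson bij_betwE)
    then have "lab y \<noteq> u" using su by (auto simp: split_node_def)
    then show "\<phi> (lab y) = lab y" unfolding \<phi>_def by simp
  next
    fix s t assume sV: "s \<in> V" and tV: "t \<in> V"
    have uE1: "\<And>t. (u,t) \<in> E \<longleftrightarrow> t = aL \<or> t = v" using cu unfolding children_def by blast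
    have uE2: "\<And>s. (s,u) \<in> E \<longleftrightarrow> s = x" using pu unfolding parents_def by blast
    have su': "s \<noteq> u'" "t \<noteq> u'" using sV tV u'V by auto
    have Tm: "\<And>s t. (s,t) \<in> T \<longleftrightarrow> ((s,t) \<in> E \<and> (s,t) \<noteq> (x,aR) \<and> (s,t) \<noteq> (u,aL)) \<or> (s,t) = (x,aL) \<or> (s,t) = (u,aR)"
      unfolding T_def by blast
    have Em: "\<And>s t. (s,t) \<in> E' \<longleftrightarrow> ((s,t) \<in> E \<and> (s,t) \<noteq> (u,v) \<and> (s,t) \<noteq> (x,aR) \<and> (s,t) \<noteq> (x,u) \<and> (s,t) \<noteq> (u,aL))
         \<or> (s,t) = (u',v) \<or> (s,t) = (x,u') \<or> (s,t) = (u',aR) \<or> (s,t) = (x,aL)"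
      unfolding E'E using u'ne by blast
    show "(s,t) \<in> T \<longleftrightarrow> (\<phi> s, \<phi> t) \<in> E'"
    proof (cases "s = u")
      case True
      show ?thesis
      proof (cases "t = u")
        case True
        have "(u,u) \<notin> T" unfolding Tm using irr xne(1) uaR_ne by simp
        moreover have "(u',u') \<notin> E'" unfolding Em using Eu' u'ne by simp
        ultimately show ?thesis using \<open>s = u\<close> True unfolding \<phi>_def by simp
      next
        case False
        have "(u,t) \<in> T \<longleftrightarrow> t = v \<or> t = aR" unfolding Tm using uE1[of t] xne(1) aLv by auto
        moreover have "(u',t) \<in> E' \<longleftrightarrow> t = v \<or> t = aR" unfolding Em using Eu' u'ne by auto
        ultimately show ?thesis using \<open>s = u\<close> False unfolding \<phi>_def by simp
      qed
    next
      case False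
      show ?thesis
      proof (cases "t = u")
        case True
        have "(s,u) \<in> T \<longleftrightarrow> s = x" unfolding Tm using uE2[of s] xne(2) uaR_ne xne(1) by auto
        moreover have "(s,u') \<in> E' \<longleftrightarrow> s = x" unfolding Em using Eu' u'ne su' by auto
        ultimately show ?thesis using \<open>s \<noteq> u\<close> True unfolding \<phi>_def by simp
      next
        case False
        have "(s,t) \<in> T \<longleftrightarrow> ((s,t) \<in> E \<and> (s,t) \<noteq> (x,aR)) \<or> (s,t) = (x,aL)"
          unfolding Tm using \<open>s \<noteq> u\<close> by auto
        moreover have "(s,t) \<in> E' \<longleftrightarrow> ((s,t) \<in> E \<and> (s,t) \<noteq> (x,aR)) \<or> (s,t) = (x,aL)"
          unfolding Em using \<open>s \<noteq> u\<close> False su' by auto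
        ultimately show ?thesis using \<open>s \<noteq> u\<close> False unfolding \<phi>_def by simp
      qed
    qed
  qed
  show ?thesis
  proof (cases "aL = aR")
    case True
    have "T = E" unfolding T_def using True xaR uaL by auto
    then have "((V,E),(V,T)) \<in> head_step X lab ^^ 0" by simp
    then show ?thesis using iso by blast
  next
    case False
    obtain n where n: "n \<le> 6" "((V,E),(V,T)) \<in> head_step X lab ^^ n"
      using core[OF net assms(2) sx xu xaR uaR_ne uaL uv vaL su False vaR] unfolding T_def by blast
    then show ?thesis using iso by blast
  qed
qed


end
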